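(* Let $d \geq 3$ be an integer. There is a function $\varepsilon_d(n)$ with $\varepsilon_d(n) \to 0$ as $n \to \infty$ such that for every positive integer $n$ there is a subset $A$ of the lattice cube $[n]^d=\{1,\dots,n\}^d$ with $|A| \geq n^{\frac{3}{d+1} - \varepsilon_d(n)}$ such that no $d+2$ points of $A$ lie on a common sphere and no $d+2$ points of $A$ lie on a common hyperplane.
   Context: $[n]=\{1,\dots,n\}$. A sphere means a $(d-1)$-dimensional sphere in $\mathbb{R}^d$; a hyperplane means an affine hyperplane in $\mathbb{R}^d$. The bound $n^{\frac{3}{d+1}-o(1)}$ is for fixed $d$ as $n\to\infty$. *)

theory Defs
  imports "HOL-Analysis.Analysis"
begin

definition lattice_cube :: "nat \<Rightarrow> (real ^ 'd) set" where
  "lattice_cube n = {x. \<forall>i. x $ i \<in> real ` {1..n}}"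

definition is_sphere :: "(real ^ 'd) set \<Rightarrow> bool" where
  "is_sphere S \<longleftrightarrow> (\<exists>c r. r > 0 \<and> S = sphere c r)"

definition is_hyperplane :: "(real ^ 'd) set \<Rightarrow> bool" where
  "is_hyperplane H \<longleftrightarrow> (\<exists>a b. a \<noteq> 0 \<and> H = {x. a \<bullet> x = b})"

definition no_k_on_common :: "nat \<Rightarrow> ((real ^ 'd) set \<Rightarrow> bool) \<Rightarrow> (real ^ 'd) set \<Rightarrow> bool" where
  "no_k_on_common k P A \<longleftrightarrow>
     (\<forall>S. S \<subseteq> A \<and> card S = k \<longrightarrow> \<not> (\<exists>T. P T \<and> S \<subseteq> T))"

end

theory Submission
  imports Defs "Jordan_Normal_Form.Determinant" "HOL-Computational_Algebra.Primes" "HOL-Computational_Algebra.Polynomial" "HOL-Number_Theory.Cong" "HOL-Real_Asymp.Real_Asymp"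
begin


lemma int_kernel:
  fixes L :: "nat \<Rightarrow> nat \<Rightarrow> int" and w :: "nat \<Rightarrow> real"
  assumes hw: "\<forall>i<m. (\<Sum>j<m. real_of_int (L i j) * w j) = 0" and hw0: "\<exists>j<m. w j \<noteq> 0"
  shows "\<exists>c::nat\<Rightarrow>int. (\<exists>j<m. c j \<noteq> 0) \<and> (\<forall>i<m. (\<Sum>j<m. L i j * c j) = 0)"
proof -
  define M :: "int mat" where "M = mat m m (\<lambda>(i,j). L i j)"
  have M: "M \<in> carrier_mat m m" unfolding M_def by simp
  define MR :: "real mat" where "MR = of_int_hom.mat_hom M"
  have MR: "MR \<in> carrier_mat m m" unfolding MR_def using M by simp
  define v :: "real Matrix.vec" where "v = Matrix.vec m w"
  have v: "v \<in> carrier_vec m" unfolding v_def by simp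
  have v0: "v \<noteq> 0\<^sub>v m"
  proof
    assume "v = 0\<^sub>v m"
    then have "\<forall>j<m. w j = 0" unfolding v_def by (metis index_vec index_zero_vec(1))
    with hw0 show False by blast
  qed
  have "MR *\<^sub>v v = 0\<^sub>v m"
  proof (rule eq_vecI)
    fix i assume i: "i < dim_vec (0\<^sub>v m :: real Matrix.vec)"
    then have i': "i < m" by simp
    have "(MR *\<^sub>v v) $ i = Matrix.row MR i \<bullet> v" using i' MR by simp
    also have "\<dots> = (\<Sum>j = 0..<m. real_of_int (L i j) * w j)"
      unfolding scalar_prod_def using i' MR_def M_def v_def by simp
    also have "\<dots> = 0" using hw i' by (simp add: atLeast0LessThan)
    finally show "(MR *\<^sub>v v) $ i = 0\<^sub>v m $ i" using i' by simp
  next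
    show "dim_vec (MR *\<^sub>v v) = dim_vec (0\<^sub>v m :: real Matrix.vec)" using MR by simp
  qed
  then have "Determinant.det MR = 0" using det_0_iff_vec_prod_zero[OF MR] v v0 by blast
  then have "Determinant.det M = 0" unfolding MR_def of_int_hom.hom_det by simp
  then obtain u where u: "u \<in> carrier_vec m" "u \<noteq> 0\<^sub>v m" "M *\<^sub>v u = 0\<^sub>v m"
    using det_0_iff_vec_prod_zero[OF M] by blast
  define c where "c = (\<lambda>j. u $ j)"
  have "\<exists>j<m. c j \<noteq> 0"
  proof (rule ccontr)
    assume "\<not> ?thesis"
    then have "u = 0\<^sub>v m" using u(1) unfolding c_def by (intro eq_vecI) auto
    with u(2) show False by simp
  qed
  moreover have "\<forall>i<m. (\<Sum>j<m. L i j * c j) = 0"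
  proof (intro allI impI)
    fix i assume i: "i < m"
    have "(M *\<^sub>v u) $ i = 0" using u(3) i by simp
    moreover have "(M *\<^sub>v u) $ i = (\<Sum>j = 0..<m. L i j * c j)"
      using i u(1) unfolding M_def c_def by (simp add: scalar_prod_def)
    ultimately show "(\<Sum>j<m. L i j * c j) = 0" by (simp add: atLeast0LessThan)
  qed
  ultimately show ?thesis by blast
qed


lemma prim_kernel:
  fixes L :: "nat \<Rightarrow> nat \<Rightarrow> int" and p :: int
  assumes ex: "\<exists>c. (\<exists>j<m. c j \<noteq> 0) \<and> (\<forall>i<m. (\<Sum>j<m. L i j * c j) = 0)" and p: "p > 1"
  shows "\<exists>c. (\<exists>j<m. \<not> p dvd c j) \<and> (\<forall>i<m. (\<Sum>j<m. L i j * c j) = 0)"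
proof -
  define P where "P = (\<lambda>c. (\<exists>j<m. c j \<noteq> 0) \<and> (\<forall>i<m. (\<Sum>j<m. L i j * c j) = 0))"
  define f where "f = (\<lambda>c::nat\<Rightarrow>int. \<Sum>j<m. nat \<bar>c j\<bar>)"
  from ex obtain c0 where "P c0" unfolding P_def by blast
  from ex_has_least_nat[of P c0 f, OF this] obtain c where
    c: "P c" and cmin: "\<And>y. P y \<Longrightarrow> f c \<le> f y" by blast
  show ?thesis
  proof (cases "\<exists>j<m. \<not> p dvd c j")
    case True then show ?thesis using c unfolding P_def by blast
  next
    case False
    define c' where "c' = (\<lambda>j. c j div p)"
    have cc: "\<And>j. j < m \<Longrightarrow> c j = p * c' j" using False unfolding c'_def by auto
    from c obtain j0 where j0: "j0 < m" "c j0 \<noteq> 0" unfolding P_def by blast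
    have "c' j0 \<noteq> 0" using cc[OF j0(1)] j0 by auto
    moreover have "\<forall>i<m. (\<Sum>j<m. L i j * c' j) = 0"
    proof (intro allI impI)
      fix i assume i: "i < m"
      have "p * (\<Sum>j<m. L i j * c' j) = (\<Sum>j<m. L i j * c j)"
        by (simp add: sum_distrib_left cc algebra_simps)
      also have "\<dots> = 0" using c i unfolding P_def by blast
      finally show "(\<Sum>j<m. L i j * c' j) = 0" using p by simp
    qed
    ultimately have Pc': "P c'" unfolding P_def using j0 by blast
    have le: "\<And>j. j < m \<Longrightarrow> nat \<bar>c' j\<bar> \<le> nat \<bar>c j\<bar>"
    proof -
      fix j assume "j < m"
      then have "\<bar>c j\<bar> = p * \<bar>c' j\<bar>" using cc p by (simp add: abs_mult)
      moreover have "\<bar>c' j\<bar> \<le> p * \<bar>c' j\<bar>" using p by (simp add: mult_le_cancel_right1)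
      ultimately show "nat \<bar>c' j\<bar> \<le> nat \<bar>c j\<bar>" by simp
    qed
    have lt: "nat \<bar>c' j0\<bar> < nat \<bar>c j0\<bar>"
    proof -
      have "\<bar>c j0\<bar> = p * \<bar>c' j0\<bar>" using cc[OF j0(1)] p by (simp add: abs_mult)
      moreover have "\<bar>c' j0\<bar> > 0" using \<open>c' j0 \<noteq> 0\<close> by simp
      moreover have "\<bar>c' j0\<bar> < p * \<bar>c' j0\<bar>" using p \<open>\<bar>c' j0\<bar> > 0\<close> by simp
      ultimately show ?thesis by simp
    qed
    have "f c' < f c" unfolding f_def
      apply (rule sum_strict_mono_ex1)
        apply simp
      using le apply simp
      using lt j0 by blast
    with cmin[OF Pc'] show ?thesis by simp
  qed
qed


lemma root_lemma:
  fixes p :: int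
  assumes "prime p"
  shows "finite T \<Longrightarrow> T \<subseteq> {0..<p} \<Longrightarrow> degree G < card T \<Longrightarrow> (\<forall>t\<in>T. p dvd poly G t)
     \<Longrightarrow> (\<forall>j. p dvd coeff G j)"
proof (induction T arbitrary: G rule: finite_induct)
  case empty
  then show ?case by simp
next
  case (insert s T)
  show ?case
  proof (cases "degree G = 0")
    case True
    then have G0: "G = [:coeff G 0:]" by (metis degree_0_id)
    then have "poly G s = coeff G 0" by (metis poly_pCons poly_0 mult_zero_right add.right_neutral)
    then have "p dvd coeff G 0" using insert by simp
    then show ?thesis by (subst G0) (auto simp: coeff_pCons split: nat.splits)
  next
    case False
  define H where "H = synthetic_div G s"
  have G: "G = [:-s, 1:] * H + [:poly G s:]" unfolding H_def by (rule synthetic_div_correct'[symmetric])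
  have degH: "degree H < card T"
  proof -
    have "degree H = degree G - 1" unfolding H_def by (simp add: degree_synthetic_div)
    then show ?thesis using insert False by auto
  qed
  have ps: "p dvd poly G s" using insert by simp
  have "\<forall>t\<in>T. p dvd poly H t"
  proof
    fix t assume t: "t \<in> T"
    have "poly G t = (t - s) * poly H t + poly G s"
      by (subst G) (simp add: algebra_simps)
    moreover have "p dvd poly G t" using insert t by simp
    ultimately have "p dvd (t - s) * poly H t" using ps by (metis dvd_add_left_iff)
    moreover have "\<not> p dvd (t - s)"
    proof
      assume d: "p dvd (t - s)"
      have ts: "t \<noteq> s" using t insert by auto
      have "t \<in> {0..<p}" using t insert by auto
      moreover have "s \<in> {0..<p}" using insert by auto
      ultimately have "\<bar>t - s\<bar> < p" by auto
      moreover have "t - s \<noteq> 0" using ts by simp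
      then have "\<bar>p\<bar> \<le> \<bar>t - s\<bar>" using d by (rule dvd_imp_le_int)
      ultimately show False using assms prime_gt_0_int by simp
    qed
    ultimately show "p dvd poly H t" using assms prime_dvd_mult_iff by blast
  qed
  then have IH: "\<forall>j. p dvd coeff H j" using insert degH by auto
  show ?thesis
  proof
    fix j
    have "[:-s, 1:] * H = Polynomial.smult (-s) H + pCons 0 H" by simp
    then have "coeff G j = - s * coeff H j + (case j of 0 \<Rightarrow> 0 | Suc k \<Rightarrow> coeff H k) + (if j = 0 then poly G s else 0)"
      by (subst G) (simp add: coeff_pCons split: nat.splits)
    then show "p dvd coeff G j" using IH ps by (auto split: nat.splits)
  qed
  qed
qed


lemma sq_inj_mod:
  fixes p a a' :: int
  assumes p: "prime p" "p > 2" and a: "0 \<le> a" "2 * a < p" and a': "0 \<le> a'" "2 * a' < p"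
    and eq: "a^2 mod p = a'^2 mod p"
  shows "a = a'"
proof -
  have "p dvd a^2 - a'^2" using eq by (simp add: mod_eq_dvd_iff)
  moreover have "a^2 - a'^2 = (a - a') * (a + a')" by (simp add: power2_eq_square algebra_simps)
  ultimately have "p dvd (a - a') \<or> p dvd (a + a')" using p(1) prime_dvd_mult_iff by metis
  then show ?thesis
  proof
    assume d: "p dvd (a - a')"
    show ?thesis
    proof (rule ccontr)
      assume "a \<noteq> a'"
      then have "a - a' \<noteq> 0" by simp
      then have "\<bar>p\<bar> \<le> \<bar>a - a'\<bar>" using d by (rule dvd_imp_le_int)
      then show False using a a' p by linarith
    qed
  next
    assume d: "p dvd (a + a')"
    show ?thesis
    proof (rule ccontr)
      assume "a \<noteq> a'"
      then have "a + a' \<noteq> 0" using a a' by linarith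
      then have "\<bar>p\<bar> \<le> \<bar>a + a'\<bar>" using d by (rule dvd_imp_le_int)
      then show False using a a' p by linarith
    qed
  qed
qed

lemma exists_sum_two_squares_neg1:
  fixes p :: int
  assumes p: "prime p" "p > 2"
  shows "\<exists>a b. p dvd a^2 + b^2 + 1"
proof (rule ccontr)
  assume nex: "\<not> ?thesis"
  define H where "H = {a::int. 0 \<le> a \<and> 2 * a < p}"
  define f where "f = (\<lambda>a::int. a^2 mod p)"
  define g where "g = (\<lambda>b::int. (-1 - b^2) mod p)"
  have Hfin: "finite H" unfolding H_def by (rule finite_subset[of _ "{0..p}"]) auto
  have Hcard: "card H = nat ((p + 1) div 2)"
  proof -
    have "H = {0..(p - 1) div 2}" unfolding H_def by auto
    then show ?thesis by simp
  qed
  have injf: "inj_on f H"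
  proof (rule inj_onI)
    fix a a' assume h: "a \<in> H" "a' \<in> H" "f a = f a'"
    show "a = a'" apply (rule sq_inj_mod[OF p]) using h unfolding H_def f_def by auto
  qed
  have injg: "inj_on g H"
  proof (rule inj_onI)
    fix a a' assume "a \<in> H" "a' \<in> H" "g a = g a'"
    then have "(-1 - a^2) mod p = (-1 - a'^2) mod p" unfolding g_def by simp
    then have "p dvd (-1 - a^2) - (-1 - a'^2)" by (simp add: mod_eq_dvd_iff)
    then have "p dvd a'^2 - a^2" by simp
    then have "a'^2 mod p = a^2 mod p" by (simp add: mod_eq_dvd_iff)
    then have "a' = a" apply (rule sq_inj_mod[OF p, rotated 4]) using \<open>a \<in> H\<close> \<open>a' \<in> H\<close> unfolding H_def by auto
    then show "a = a'" by simp
  qed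
  have disj: "f ` H \<inter> g ` H = {}"
  proof (rule ccontr)
    assume "f ` H \<inter> g ` H \<noteq> {}"
    then obtain a b where "a^2 mod p = (-1 - b^2) mod p" unfolding f_def g_def by blast
    then have "p dvd a^2 - (-1 - b^2)" by (simp add: mod_eq_dvd_iff)
    then have "p dvd a^2 + b^2 + 1" by (simp add: algebra_simps)
    with nex show False by blast
  qed
  have sub: "f ` H \<union> g ` H \<subseteq> {0..<p}" unfolding f_def g_def using p by (auto intro: pos_mod_bound)
  have "card (f ` H \<union> g ` H) = card (f ` H) + card (g ` H)"
    using disj Hfin by (simp add: card_Un_disjoint)
  also have "\<dots> = 2 * nat ((p + 1) div 2)" using card_image[OF injf] card_image[OF injg] Hcard by simp
  moreover have "card (f ` H \<union> g ` H) \<le> card {0..<p}" by (rule card_mono[OF _ sub]) simp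
  ultimately have "2 * nat ((p + 1) div 2) \<le> card {0..<p}" by simp
  moreover have "odd p" using p prime_odd_int by blast
  then obtain k where k: "p = 2 * k + 1" by (blast elim: oddE)
  then have "(p + 1) div 2 = k + 1" by simp
  ultimately show False using p k by simp
qed


lemma Suc_div_split:
  assumes "(q::nat) > 0"
  shows "Suc n div q = n div q + (if q dvd Suc n then 1 else 0)"
  using assms by (auto simp: div_Suc dvd_eq_mod_eq_0)

lemma mult_Suc_count:
  fixes p n :: nat
  assumes p: "prime p"
  shows "multiplicity p (Suc n) = card {k\<in>{1..Suc n}. p^k dvd Suc n}"
proof -
  define \<mu> where "\<mu> = multiplicity p (Suc n)"
  have p1: "p \<ge> 2" using p prime_ge_2_nat by blast
  have nu: "\<not> is_unit p" using p1 by simp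
  have iff: "\<And>k. p^k dvd Suc n \<longleftrightarrow> k \<le> \<mu>"
    unfolding \<mu>_def by (rule power_dvd_iff_le_multiplicity[OF _ nu]) simp
  have "p^\<mu> dvd Suc n" using iff by simp
  then have "p^\<mu> \<le> Suc n" by (rule dvd_imp_le) simp
  moreover have "\<mu> < 2^\<mu>" by (rule less_exp)
  moreover have "2^\<mu> \<le> p^\<mu>" using p1 by (rule power_mono) simp
  ultimately have "\<mu> \<le> Suc n" by linarith
  have "{k\<in>{1..Suc n}. p^k dvd Suc n} = {1..\<mu>}"
  proof (rule Set.set_eqI)
    fix k
    show "k \<in> {k\<in>{1..Suc n}. p^k dvd Suc n} \<longleftrightarrow> k \<in> {1..\<mu>}"
      using iff[of k] \<open>\<mu> \<le> Suc n\<close> by simp linarith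
  qed
  then show ?thesis unfolding \<mu>_def by simp
qed

lemma sum_indicator_card:
  "finite A \<Longrightarrow> (\<Sum>k\<in>A. (if P k then 1 else 0::nat)) = card {k\<in>A. P k}"
  by (simp add: sum.If_cases Int_def conj_commute)

lemma legendre:
  fixes p :: nat
  assumes p: "prime p"
  shows "multiplicity p (fact n) = (\<Sum>k\<in>{1..n}. n div p^k)"
proof (induction n)
  case 0
  then show ?case by simp
next
  case (Suc n)
  have p1: "p \<ge> 2" using p prime_ge_2_nat by blast
  have "multiplicity p (fact (Suc n) :: nat) = multiplicity p (Suc n * fact n)" by (simp add: fact_Suc)
  also have "\<dots> = multiplicity p (Suc n) + multiplicity p (fact n :: nat)"
    using p by (intro prime_elem_multiplicity_mult_distrib) auto
  also have "\<dots> = card {k\<in>{1..Suc n}. p^k dvd Suc n} + (\<Sum>k\<in>{1..n}. n div p^k)"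
    using Suc mult_Suc_count[OF p] by simp
  also have "(\<Sum>k\<in>{1..n}. n div p^k) = (\<Sum>k\<in>{1..Suc n}. n div p^k)"
  proof -
    have "Suc n < 2 ^ Suc n" by (rule less_exp)
    then have "n < 2 ^ Suc n" by linarith
    also have "2 ^ Suc n \<le> p ^ Suc n" using p1 by (rule power_mono) simp
    finally have "n div p ^ Suc n = 0" by simp
    then show ?thesis by simp
  qed
  also have "card {k\<in>{1..Suc n}. p^k dvd Suc n} = (\<Sum>k\<in>{1..Suc n}. (if p^k dvd Suc n then 1 else 0))"
    by (rule sum_indicator_card[symmetric]) simp
  also have "\<dots> + (\<Sum>k\<in>{1..Suc n}. n div p^k) = (\<Sum>k\<in>{1..Suc n}. Suc n div p^k)"
  proof -
    have "\<And>k. Suc n div p^k = n div p^k + (if p^k dvd Suc n then 1 else 0)"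
      by (rule Suc_div_split) (use p1 in simp)
    then show ?thesis by (simp only: sum.distrib[symmetric] add.commute)
  qed
  finally show ?case by simp
qed

lemma div_double_le:
  fixes m q :: nat
  assumes "q > 0"
  shows "2 * m div q \<le> 2 * (m div q) + (if q \<le> 2 * m then 1 else 0)"
proof (cases "q \<le> 2 * m")
  case True
  have e: "m = q * (m div q) + m mod q" by simp
  have "m mod q < q" using assms by simp
  then have "2 * m < 2 * (q * (m div q)) + 2 * q" using e by linarith
  also have "\<dots> = (2 * (m div q) + 2) * q" by (simp add: algebra_simps)
  finally have "2 * m < (2 * (m div q) + 2) * q" .
  then have "2 * m div q < 2 * (m div q) + 2" by (rule less_mult_imp_div_less)
  then show ?thesis using True by simp
next
  case False
  then show ?thesis by simp
qed

lemma central_binom_mult_bound: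
  fixes p m :: nat
  assumes p: "prime p" and m: "m \<ge> 1"
  shows "p ^ multiplicity p ((2*m) choose m) \<le> 2 * m"
proof -
  define B where "B = (2*m) choose m"
  define S where "S = {k\<in>{1..2*m}. p^k \<le> 2*m}"
  have p1: "p \<ge> 2" using p prime_ge_2_nat by blast
  have Bpos: "B > 0" unfolding B_def by simp
  have "fact m * fact (2*m - m) * B = (fact (2*m) :: nat)" unfolding B_def by (rule binomial_fact_lemma) simp
  then have fe: "fact (2*m) = B * (fact m * fact m :: nat)" by (simp add: algebra_simps)
  have "multiplicity p (fact (2*m) :: nat) = multiplicity p B + (multiplicity p (fact m :: nat) + multiplicity p (fact m :: nat))"
    unfolding fe using p Bpos by (simp add: prime_elem_multiplicity_mult_distrib)
  then have eq: "(\<Sum>k\<in>{1..2*m}. 2*m div p^k) = multiplicity p B + 2 * (\<Sum>k\<in>{1..m}. m div p^k)"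
    using legendre[OF p] by simp
  have ext: "(\<Sum>k\<in>{1..m}. m div p^k) = (\<Sum>k\<in>{1..2*m}. m div p^k)"
  proof (rule sum.mono_neutral_left)
    show "\<forall>i\<in>{1..2 * m} - {1..m}. m div p ^ i = 0"
    proof
      fix i assume "i \<in> {1..2 * m} - {1..m}"
      then have "i > m" by auto
      have "m < 2 ^ m" by (rule less_exp)
      also have "\<dots> \<le> 2 ^ i" using \<open>i > m\<close> by (simp add: power_increasing)
      also have "\<dots> \<le> p ^ i" using p1 by (rule power_mono) simp
      finally show "m div p ^ i = 0" by simp
    qed
  qed auto
  have "(\<Sum>k\<in>{1..2*m}. 2*m div p^k) \<le> (\<Sum>k\<in>{1..2*m}. 2 * (m div p^k) + (if p^k \<le> 2*m then 1 else 0))"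
    by (rule sum_mono) (use div_double_le p1 in auto)
  also have "\<dots> = 2 * (\<Sum>k\<in>{1..2*m}. m div p^k) + card S"
    unfolding S_def by (simp add: sum.distrib sum_distrib_left sum_indicator_card)
  finally have multle: "multiplicity p B \<le> card S" using eq ext by simp
  have "p ^ card S \<le> 2 * m"
  proof (cases "S = {}")
    case True then show ?thesis using m by simp
  next
    case False
    have fin: "finite S" unfolding S_def by simp
    have "S \<subseteq> {1..Max S}" using fin Max_ge unfolding S_def by fastforce
    then have "card S \<le> Max S" using card_mono[of "{1..Max S}" S] by simp
    then have "p ^ card S \<le> p ^ Max S" using p1 by (simp add: power_increasing)
    also have "Max S \<in> S" using fin False by simp
    then have "p ^ Max S \<le> 2 * m" unfolding S_def by simp
    finally show ?thesis .
  qed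
  moreover have "p ^ multiplicity p B \<le> p ^ card S" using multle p1 by (simp add: power_increasing)
  ultimately show ?thesis unfolding B_def by simp
qed


lemma card_real_less: assumes x0: "x \<ge> 0" shows "real (card {q::nat. real q < x}) \<le> x + 1"
proof (cases "x \<le> 0")
  case True
  then have "{q::nat. real q < x} = {}" by auto
  then show ?thesis using x0 by simp
next
  case False
  have "{q::nat. real q < x} \<subseteq> {..< nat \<lceil>x\<rceil>}"
  proof
    fix q assume "q \<in> {q::nat. real q < x}"
    then have "real q < x" by simp
    then have "int q < \<lceil>x\<rceil>" by linarith
    then show "q \<in> {..< nat \<lceil>x\<rceil>}" by simp
  qed
  then have "card {q::nat. real q < x} \<le> nat \<lceil>x\<rceil>" using card_mono[of "{..< nat \<lceil>x\<rceil>}"] by fastforce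
  moreover have "real (nat \<lceil>x\<rceil>) \<le> x + 1" using False by linarith
  ultimately show ?thesis by (metis of_nat_le_iff order_trans)
qed

lemma prime_in_range_aux:
  fixes N :: nat
  assumes E1: "(real N powr (3/4) + 2) * ln (real N) < (real N - 1) * ln 2" and N: "N \<ge> 4"
  shows "\<exists>p::nat. prime p \<and> real N powr (3/4) \<le> real p \<and> p \<le> N"
proof (rule ccontr)
  assume nex: "\<not> ?thesis"
  define m where "m = N div 2"
  have m1: "m \<ge> 1" unfolding m_def using N by linarith
  have m2: "2 * m \<le> N" unfolding m_def by linarith
  have m3: "real N - 1 \<le> 2 * real m" unfolding m_def by linarith
  define B where "B = (2*m) choose m"
  have Bpos: "B > 0" unfolding B_def by simp
  define x where "x = real N powr (3/4)"
  have Bd: "B dvd fact (2*m)"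
  proof -
    have "fact m * fact (2*m - m) * B = (fact (2*m) :: nat)" unfolding B_def by (rule binomial_fact_lemma) simp
    then have "fact (2*m) = B * (fact m * fact (2*m - m))" by (simp add: ac_simps)
    then show ?thesis by (rule dvdI)
  qed
  have pf: "prime_factors B \<subseteq> {q. real q < x}"
  proof
    fix q assume q: "q \<in> prime_factors B"
    then have qp: "prime q" and qd: "q dvd B" by auto
    have "q dvd fact (2*m)" using qd Bd by (rule dvd_trans)
    then have "q \<le> 2*m" using qp prime_dvd_fact_iff by blast
    then have qN: "q \<le> N" using m2 by simp
    show "q \<in> {q. real q < x}"
    proof (rule ccontr)
      assume "q \<notin> {q. real q < x}"
      then have "x \<le> real q" by simp
      then have "\<exists>p::nat. prime p \<and> real N powr (3/4) \<le> real p \<and> p \<le> N" using qp qN unfolding x_def by blast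
      with nex show False by blast
    qed
  qed
  have finx: "finite {q::nat. real q < x}"
  proof (rule finite_subset)
    show "{q::nat. real q < x} \<subseteq> {..nat \<lceil>x\<rceil>}"
    proof
      fix q assume "q \<in> {q::nat. real q < x}"
      then have "real q < x" by simp
      then have "int q \<le> \<lceil>x\<rceil>" by linarith
      then show "q \<in> {..nat \<lceil>x\<rceil>}" by simp
    qed
  qed simp
  have cardpf: "real (card (prime_factors B)) \<le> x + 1"
  proof -
    have "card (prime_factors B) \<le> card {q::nat. real q < x}" by (rule card_mono[OF finx pf])
    moreover have "x \<ge> 0" unfolding x_def by simp
    ultimately show ?thesis using card_real_less[of x] by linarith
  qed
  have "B = (\<Prod>q\<in>prime_factors B. q ^ multiplicity q B)" using Bpos by (rule prime_factorization_nat)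
  also have "\<dots> \<le> (\<Prod>q\<in>prime_factors B. N)"
  proof (rule prod_mono)
    fix q assume "q \<in> prime_factors B"
    then have "prime q" by auto
    then have "q ^ multiplicity q B \<le> 2 * m" unfolding B_def using central_binom_mult_bound m1 by blast
    then show "0 \<le> q ^ multiplicity q B \<and> q ^ multiplicity q B \<le> N" using m2 by simp
  qed
  also have "\<dots> = N ^ card (prime_factors B)" by simp
  finally have "B \<le> N ^ card (prime_factors B)" .
  then have BN: "real B \<le> real N ^ card (prime_factors B)" by (metis of_nat_le_iff of_nat_power)
  have lb: "4 ^ m / (2 * real m) \<le> real B" unfolding B_def using central_binomial_lower_bound m1 by simp
  have Npos: "real N > 0" using N by simp
  have lbpos: "0 < 4 ^ m / (2 * real m)" using m1 by simp
  have Brpos: "0 < real B" using Bpos by simp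
  have "ln (4 ^ m / (2 * real m)) \<le> ln (real B)" by (rule ln_mono[OF lb lbpos])
  also have "\<dots> \<le> ln (real N ^ card (prime_factors B))" by (rule ln_mono[OF BN Brpos])
  also have "\<dots> = real (card (prime_factors B)) * ln (real N)" by (rule ln_realpow)
  also have "\<dots> \<le> (x + 1) * ln (real N)"
  proof (rule mult_right_mono[OF cardpf])
    show "0 \<le> ln (real N)" using N by simp
  qed
  finally have L1: "ln (4 ^ m / (2 * real m)) \<le> (x + 1) * ln (real N)" .
  have L2: "ln (4 ^ m / (2 * real m)) = ln (4 ^ m) - ln (2 * real m)"
    using m1 by (intro ln_divide_pos) auto
  have L3: "ln ((4::real) ^ m) = real m * ln 4" by (rule ln_realpow)
  have L4: "ln (4::real) = 2 * ln 2"
  proof -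
    have "ln ((2::real)^2) = 2 * ln 2" using ln_realpow[of 2 2] by simp
    then show ?thesis by simp
  qed
  have L5: "ln (2 * real m) \<le> ln (real N)"
  proof (rule ln_mono)
    show "2 * real m \<le> real N" using m2 by linarith
    show "0 < 2 * real m" using m1 by simp
  qed
  have L6: "(x + 2) * ln (real N) = (x + 1) * ln (real N) + ln (real N)" by (simp add: algebra_simps)
  have L7: "real m * ln 4 = 2 * real m * ln 2" using L4 by simp
  have L8: "(real N - 1) * ln 2 \<le> 2 * real m * ln 2" using m3 by (intro mult_right_mono) auto
  have "(real N - 1) * ln 2 \<le> (x + 2) * ln (real N)" using L1 L2 L3 L5 L6 L7 L8 by linarith
  then show False using E1 unfolding x_def by linarith
qed

lemma exists_prime_large:
  "\<forall>\<^sub>F N in sequentially. \<exists>p::nat. prime p \<and> real N powr (3/4) \<le> real p \<and> p \<le> N \<and> 7 \<le> p"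
proof -
  have E1: "\<forall>\<^sub>F N in sequentially. (real N powr (3/4) + 2) * ln (real N) < (real N - 1) * ln 2" by real_asymp
  have E2: "\<forall>\<^sub>F N in sequentially. 7 < real N powr (3/4)" by real_asymp
  have E3: "\<forall>\<^sub>F N in sequentially. N \<ge> (4::nat)" by (rule eventually_ge_at_top)
  show ?thesis
  proof (rule eventually_mono[OF eventually_conj[OF E1 eventually_conj[OF E2 E3]]])
    fix N :: nat assume h: "(real N powr (3/4) + 2) * ln (real N) < (real N - 1) * ln 2 \<and> 7 < real N powr (3/4) \<and> N \<ge> 4"
    then obtain p where p: "prime p" "real N powr (3/4) \<le> real p" "p \<le> N" using prime_in_range_aux by blast
    then have "7 \<le> p" using h by linarith
    then show "\<exists>p::nat. prime p \<and> real N powr (3/4) \<le> real p \<and> p \<le> N \<and> 7 \<le> p" using p by blast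
  qed
qed


definition Qp :: "nat \<Rightarrow> int poly" where
  "Qp D = (\<Sum>k\<in>{3..<D}. monom 1 (2*(k-1))) - monom 1 (2*D-2)"

definition Pp :: "nat \<Rightarrow> int \<Rightarrow> int poly" where
  "Pp D \<kappa> = Polynomial.smult (-\<kappa>) (monom 1 2 * poly_shift (D+2) (Qp D))"

definition Vp :: "nat \<Rightarrow> int \<Rightarrow> int poly" where
  "Vp D \<kappa> = monom 1 1 + Pp D \<kappa>"

definition Xp :: "nat \<Rightarrow> int \<Rightarrow> int \<Rightarrow> int \<Rightarrow> nat \<Rightarrow> int poly" where
  "Xp D a b \<kappa> k = (if k = 0 then monom 1 D + Vp D \<kappa>
     else if k = 1 then Polynomial.smult a (monom 1 D) - Polynomial.smult a (Vp D \<kappa>) + Polynomial.smult b (monom 1 (D-1))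
     else if k = 2 then Polynomial.smult b (monom 1 D) - Polynomial.smult b (Vp D \<kappa>) - Polynomial.smult a (monom 1 (D-1))
     else monom 1 (k-1))"

definition Np :: "nat \<Rightarrow> int poly" where
  "Np D = Polynomial.smult 4 (monom 1 (D+1)) + poly_cutoff (D+2) (Qp D)"

lemma coeff_Qp: "coeff (Qp D) i = (\<Sum>k\<in>{3..<D}. (if i = 2*(k-1) then 1 else 0)) - (if i = 2*D-2 then 1 else 0)"
  unfolding Qp_def by (simp add: coeff_sum coeff_monom eq_commute)

lemma coeff_Qp_high: "i > 2*D-2 \<Longrightarrow> coeff (Qp D) i = 0"
proof -
  assume i: "i > 2*D-2"
  have "(\<Sum>k\<in>{3..<D}. (if i = 2*(k-1) then 1 else 0::int)) = 0" by (rule sum.neutral) (use i in auto)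
  then show ?thesis by (subst coeff_Qp) (use i in simp)
qed

lemma coeff_Pp: "coeff (Pp D \<kappa>) j = (if 2 \<le> j then -\<kappa> * coeff (Qp D) (j + D) else 0)"
proof -
  have "2 \<le> j \<Longrightarrow> j - 2 + (D + 2) = j + D" by arith
  then show ?thesis unfolding Pp_def by (auto simp: coeff_monom_mult coeff_poly_shift)
qed

lemma coeff_Pp_zero: "D \<ge> 3 \<Longrightarrow> (j < 2 \<or> j > D - 2) \<Longrightarrow> coeff (Pp D \<kappa>) j = 0"
proof -
  assume D: "D \<ge> 3" and j: "j < 2 \<or> j > D - 2"
  show ?thesis
  proof (cases "j < 2")
    case True then show ?thesis by (subst coeff_Pp) simp
  next
    case False
    then have "2*D-2 < j + D" using j D by arith
    then show ?thesis by (subst coeff_Pp) (use coeff_Qp_high[of D "j + D"] in simp)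
  qed
qed

lemma coeff_Vp: "coeff (Vp D \<kappa>) j = (if j = 1 then 1 else 0) + coeff (Pp D \<kappa>) j"
  unfolding Vp_def by (simp add: coeff_monom)

lemma coeff_Xp_ge3: "k \<ge> 3 \<Longrightarrow> coeff (Xp D a b \<kappa> k) j = (if j = k - 1 then 1 else 0)"
  unfolding Xp_def by (simp add: coeff_monom)

lemma coeff_Xp_high: "D \<ge> 3 \<Longrightarrow> k < D \<Longrightarrow> j > D \<Longrightarrow> coeff (Xp D a b \<kappa> k) j = 0"
  unfolding Xp_def by (auto simp: coeff_monom coeff_Vp coeff_Pp_zero)

lemma coeff_Xp_0: "D \<ge> 3 \<Longrightarrow> coeff (Xp D a b \<kappa> k) 0 = 0"
  unfolding Xp_def by (auto simp: coeff_monom coeff_Vp coeff_Pp_zero)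

lemma coeff_Np_high: "j > D + 1 \<Longrightarrow> coeff (Np D) j = 0"
  unfolding Np_def by (simp add: coeff_monom coeff_poly_cutoff)

lemma card_le1: "card {k\<in>{3..<D}. ((D::nat)+1) = 2*(k-1)} \<le> (1::nat)"
proof -
  have "{k\<in>{3..<D}. (D+1) = 2*(k-1)} \<subseteq> {((D::nat)+1) div 2 + 1}" by auto
  then have "card {k\<in>{3..<D}. (D+1) = 2*(k-1)} \<le> card {((D::nat)+1) div 2 + 1}" by (intro card_mono) auto
  then show ?thesis by simp
qed

lemma coeff_Np_top: "D \<ge> 3 \<Longrightarrow> 3 \<le> coeff (Np D) (D+1) \<and> coeff (Np D) (D+1) \<le> 5"
proof -
  assume D: "D \<ge> 3"
  have c: "coeff (Np D) (D+1) = 4 + coeff (Qp D) (D+1)"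
    unfolding Np_def by (simp add: coeff_monom coeff_poly_cutoff)
  have s: "(\<Sum>k\<in>{3..<D}. (if D+1 = 2*(k-1) then 1 else 0::int)) = int (card {k\<in>{3..<D}. (D+1) = 2*(k-1)})"
    by (simp add: sum.If_cases Int_def conj_commute)
  have "0 \<le> (\<Sum>k\<in>{3..<D}. (if D+1 = 2*(k-1) then 1 else 0::int))" by (rule sum_nonneg) simp
  moreover have "(\<Sum>k\<in>{3..<D}. (if D+1 = 2*(k-1) then 1 else 0::int)) \<le> 1" unfolding s using card_le1[of D] by simp
  ultimately show ?thesis unfolding c coeff_Qp by auto
qed


lemma cutoff_shift: "(q::int poly) = poly_cutoff n q + monom 1 n * poly_shift n q"
  by (rule poly_eqI) (auto simp: coeff_poly_cutoff coeff_monom_mult coeff_poly_shift)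

lemma sum_split3: "(D::nat) \<ge> 3 \<Longrightarrow> (\<Sum>k<D. f k) = f 0 + f 1 + f 2 + (\<Sum>k\<in>{3..<D}. f k)"
proof -
  assume D: "D \<ge> 3"
  have "{..<D} = {..<3} \<union> {3..<D}" using D by auto
  then have "(\<Sum>k<D. f k) = sum f ({..<3} \<union> {3..<D})" by simp
  also have "\<dots> = (\<Sum>k<3. f k) + (\<Sum>k\<in>{3..<D}. f k)" by (rule sum.union_disjoint) auto
  also have "(\<Sum>k<3. f k) = f 0 + f 1 + f 2" by (simp add: numeral_3_eq_3 numeral_2_eq_2 lessThan_Suc ac_simps)
  finally show ?thesis .
qed

lemma aux_ring_e:
  fixes u t k sh a b w c :: int
  shows "(u + (t - k*t^2* sh))^2 + (a*(u - (t - k*t^2* sh)) + b*w)^2 + (b*(u - (t - k*t^2* sh)) - a*w)^2 + (c + u*t^2* sh + w^2) - (4*(u*t) + c)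
     = (1 - 4*k)*(u*t^2* sh) + (a^2+b^2+1)*((u - (t - k*t^2* sh))^2 + w^2)"
  by (simp add: algebra_simps power2_eq_square)

lemma sumsq_dvd:
  fixes a b \<kappa> p t :: int
  assumes D: "D \<ge> 3" and ab: "p dvd a^2 + b^2 + 1" and kp: "p dvd 4 * \<kappa> - 1"
  shows "p dvd ((\<Sum>k<D. (poly (Xp D a b \<kappa> k) t)^2) - poly (Np D) t)"
proof -
  define u where "u = t^D"
  define w where "w = t^(D-1)"
  define sh where "sh = poly (poly_shift (D+2) (Qp D)) t"
  define H where "H = u * t^2 * sh"
  define cut where "cut = poly (poly_cutoff (D+2) (Qp D)) t"
  define S3 where "S3 = (\<Sum>k\<in>{3..<D}. t^(2*(k-1)))"
  define v where "v = poly (Vp D \<kappa>) t"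
  have v: "v = t - \<kappa> * t^2 * sh"
    unfolding v_def sh_def Vp_def Pp_def by (simp add: poly_monom algebra_simps)
  have w2: "w^2 = t^(2*D-2)"
  proof -
    have "w^2 = t^((D-1)*2)" unfolding w_def by (simp add: power_mult)
    also have "(D-1)*2 = 2*D-2" by simp
    finally show ?thesis .
  qed
  have Q: "poly (Qp D) t = S3 - w^2"
    unfolding Qp_def S3_def w2 by (simp add: poly_sum poly_monom)
  have Q2: "poly (Qp D) t = cut + H"
    unfolding cut_def H_def u_def sh_def by (subst cutoff_shift[of "Qp D" "D+2"]) (simp add: poly_monom power_add power2_eq_square)
  have X0: "poly (Xp D a b \<kappa> 0) t = u + v" unfolding Xp_def u_def v_def by (simp add: poly_monom)
  have X1: "poly (Xp D a b \<kappa> 1) t = a * (u - v) + b * w" unfolding Xp_def u_def v_def w_def by (simp add: poly_monom algebra_simps)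
  have X2: "poly (Xp D a b \<kappa> 2) t = b * (u - v) - a * w" unfolding Xp_def u_def v_def w_def by (simp add: poly_monom algebra_simps)
  have X3: "(\<Sum>k\<in>{3..<D}. (poly (Xp D a b \<kappa> k) t)^2) = S3"
    unfolding S3_def by (rule sum.cong) (auto simp: Xp_def poly_monom power_mult[symmetric] mult.commute)
  have sum: "(\<Sum>k<D. (poly (Xp D a b \<kappa> k) t)^2) = (u+v)^2 + (a * (u - v) + b * w)^2 + (b * (u - v) - a * w)^2 + S3"
    using sum_split3[OF D, of "\<lambda>k. (poly (Xp D a b \<kappa> k) t)^2"] X0 X1 X2 X3 by simp
  have ut: "t^(D+1) = u * t" unfolding u_def by simp
  have N: "poly (Np D) t = 4 * (u * t) + cut" unfolding Np_def cut_def u_def by (simp add: poly_monom)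
  have S3: "S3 = cut + H + w^2" using Q Q2 by simp
  have e: "(\<Sum>k<D. (poly (Xp D a b \<kappa> k) t)^2) - poly (Np D) t
      = (1 - 4 * \<kappa>) * H + (a^2 + b^2 + 1) * ((u - v)^2 + w^2)"
    unfolding sum N S3 v H_def by (rule aux_ring_e)
  have "p dvd (1 - 4 * \<kappa>) * H" using kp by (metis dvd_mult2 dvd_minus_iff minus_diff_eq)
  moreover have "p dvd (a^2 + b^2 + 1) * ((u - v)^2 + w^2)" using ab by simp
  ultimately show ?thesis unfolding e by simp
qed


lemma sum3_delta:
  fixes c :: "nat \<Rightarrow> int"
  shows "(\<Sum>k\<in>{3..<D}. c k * (if j = k - 1 then 1 else 0)) = (if 2 \<le> j \<and> j + 1 < D then c (j+1) else 0)"
proof -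
  have "(\<Sum>k\<in>{3..<D}. c k * (if j = k - 1 then 1 else 0)) = (\<Sum>k\<in>{3..<D}. (if k = j + 1 then c k else 0))"
    by (rule sum.cong) auto
  also have "\<dots> = (if j + 1 \<in> {3..<D} then c (j+1) else 0)" by (rule sum.delta) simp
  also have "(j + 1 \<in> {3..<D}) = (2 \<le> j \<and> j + 1 < D)" by auto
  finally show ?thesis .
qed

lemma coeff_X012:
  "coeff (Xp D a b \<kappa> 0) j = (if j = D then 1 else 0) + (if j = 1 then 1 else 0) + coeff (Pp D \<kappa>) j"
  "coeff (Xp D a b \<kappa> 1) j = a * (if j = D then 1 else 0) - a * ((if j = 1 then 1 else 0) + coeff (Pp D \<kappa>) j) + b * (if j = D - 1 then 1 else 0)"
  "coeff (Xp D a b \<kappa> 2) j = b * (if j = D then 1 else 0) - b * ((if j = 1 then 1 else 0) + coeff (Pp D \<kappa>) j) - a * (if j = D - 1 then 1 else 0)"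
  by (simp_all add: Xp_def coeff_Vp coeff_monom eq_commute)

lemma coeff_sumX:
  fixes c :: "nat \<Rightarrow> int"
  assumes D: "D \<ge> 3"
  shows "(\<Sum>k<D. c k * coeff (Xp D a b \<kappa> k) j) =
    c 0 * coeff (Xp D a b \<kappa> 0) j + c 1 * coeff (Xp D a b \<kappa> 1) j + c 2 * coeff (Xp D a b \<kappa> 2) j
    + (if 2 \<le> j \<and> j + 1 < D then c (j+1) else 0)"
proof -
  have "(\<Sum>k\<in>{3..<D}. c k * coeff (Xp D a b \<kappa> k) j) = (\<Sum>k\<in>{3..<D}. c k * (if j = k - 1 then 1 else 0))"
    by (rule sum.cong) (auto simp: coeff_Xp_ge3)
  then show ?thesis using sum_split3[OF D, of "\<lambda>k. c k * coeff (Xp D a b \<kappa> k) j"] sum3_delta[where c=c and D=D and j=j] by simp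
qed

lemma arc:
  fixes a b \<kappa> p e0 eN :: int and c :: "nat \<Rightarrow> int" and T :: "int set"
  assumes D: "D \<ge> 3" and p: "prime p" "p \<ge> 7" and ab: "p dvd a^2 + b^2 + 1" and kp: "p dvd 4 * \<kappa> - 1"
    and T: "finite T" "T \<subseteq> {0..<p}" "card T = D + 2"
    and root: "\<forall>t\<in>T. p dvd (e0 + (\<Sum>k<D. c k * poly (Xp D a b \<kappa> k) t) + eN * (\<Sum>k<D. (poly (Xp D a b \<kappa> k) t)^2))"
  shows "p dvd e0 \<and> p dvd eN \<and> (\<forall>k<D. p dvd c k)"
proof -
  define G where "G = [:e0:] + (\<Sum>k<D. Polynomial.smult (c k) (Xp D a b \<kappa> k)) + Polynomial.smult eN (Np D)"
  have polyG: "\<And>t. poly G t = e0 + (\<Sum>k<D. c k * poly (Xp D a b \<kappa> k) t) + eN * poly (Np D) t"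
    unfolding G_def by (simp add: poly_sum)
  have coeffG: "\<And>j. coeff G j = (if j = 0 then e0 else 0) + (\<Sum>k<D. c k * coeff (Xp D a b \<kappa> k) j) + eN * coeff (Np D) j"
    unfolding G_def by (simp add: coeff_sum coeff_pCons split: nat.splits)
  have "degree G \<le> D + 1"
  proof (rule degree_le)
    show "\<forall>i>D + 1. coeff G i = 0"
    proof (intro allI impI)
      fix i assume i: "i > D + 1"
      have "(\<Sum>k<D. c k * coeff (Xp D a b \<kappa> k) i) = 0"
        by (rule sum.neutral) (use coeff_Xp_high[OF D _ , of _ i] i in auto)
      then show "coeff G i = 0" unfolding coeffG using coeff_Np_high[of D i] i by simp
    qed
  qed
  then have degG: "degree G < card T" using T(3) by simp
  have rootG: "\<forall>t\<in>T. p dvd poly G t"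
  proof
    fix t assume t: "t \<in> T"
    have "poly G t = (e0 + (\<Sum>k<D. c k * poly (Xp D a b \<kappa> k) t) + eN * (\<Sum>k<D. (poly (Xp D a b \<kappa> k) t)^2))
        - eN * ((\<Sum>k<D. (poly (Xp D a b \<kappa> k) t)^2) - poly (Np D) t)"
      unfolding polyG by (simp add: algebra_simps)
    moreover have "p dvd eN * ((\<Sum>k<D. (poly (Xp D a b \<kappa> k) t)^2) - poly (Np D) t)"
      using sumsq_dvd[OF D ab kp] by simp
    ultimately show "p dvd poly G t" using root t by simp
  qed
  have allc: "\<And>j. p dvd coeff G j" using root_lemma[OF p(1) T(1) T(2) degG rootG] by blast
  define lam0 where "lam0 = coeff (Np D) (D+1)"
  have lam: "3 \<le> lam0" "lam0 \<le> 5" unfolding lam0_def using coeff_Np_top[OF D] by auto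
  have "coeff G (D+1) = eN * lam0"
  proof -
    have "(\<Sum>k<D. c k * coeff (Xp D a b \<kappa> k) (D+1)) = 0"
      by (rule sum.neutral) (use coeff_Xp_high[OF D] in auto)
    then show ?thesis unfolding coeffG lam0_def by simp
  qed
  then have "p dvd eN * lam0" using allc[of "D+1"] by simp
  moreover have "\<not> p dvd lam0"
  proof
    assume "p dvd lam0"
    then have "p \<le> lam0" using lam by (intro zdvd_imp_le) auto
    then show False using lam p by simp
  qed
  ultimately have peN: "p dvd eN" using p(1) prime_dvd_mult_iff by blast
  define cf where "cf = (\<lambda>j. (\<Sum>k<D. c k * coeff (Xp D a b \<kappa> k) j))"
  have cfd: "\<And>j. j \<noteq> 0 \<Longrightarrow> p dvd cf j"
  proof -
    fix j :: nat assume j: "j \<noteq> 0"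
    have "coeff G j = cf j + eN * coeff (Np D) j" unfolding coeffG cf_def using j by simp
    moreover have "p dvd eN * coeff (Np D) j" using peN by simp
    ultimately show "p dvd cf j" using allc[of j] by (metis dvd_add_left_iff)
  qed
  have "coeff G 0 = e0 + cf 0 + eN * coeff (Np D) 0" unfolding coeffG cf_def by simp
  moreover have "cf 0 = 0" unfolding cf_def by (rule sum.neutral) (use coeff_Xp_0[OF D] in simp)
  moreover have "p dvd eN * coeff (Np D) 0" using peN by simp
  ultimately have pe0: "p dvd e0" using allc[of 0] by (metis add.right_neutral dvd_add_left_iff)
  have PD: "coeff (Pp D \<kappa>) D = 0" "coeff (Pp D \<kappa>) 1 = 0" "coeff (Pp D \<kappa>) (D-1) = 0"
  proof -
    have "D - 2 < D - 1" using D by arith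
    then show "coeff (Pp D \<kappa>) (D-1) = 0" using coeff_Pp_zero[OF D, of "D-1" \<kappa>] by blast
  qed (use coeff_Pp_zero[OF D, of D \<kappa>] coeff_Pp_zero[OF D, of 1 \<kappa>] D in auto)
  have Dneq: "D \<noteq> D - 1" "D \<noteq> 1" "D - 1 \<noteq> 1" "D - 1 \<noteq> D" "D - 1 + 1 = D" using D by auto
  have s1: "p dvd c 0 + a * c 1 + b * c 2"
  proof -
    have "cf D = c 0 + a * c 1 + b * c 2" unfolding cf_def coeff_sumX[OF D] coeff_X012 using D PD Dneq by (simp add: algebra_simps)
    then show ?thesis using cfd[of D] D by simp
  qed
  have s2: "p dvd c 0 - a * c 1 - b * c 2"
  proof -
    have "cf 1 = c 0 - a * c 1 - b * c 2" unfolding cf_def coeff_sumX[OF D] coeff_X012 using D PD Dneq by (simp add: algebra_simps)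
    then show ?thesis using cfd[of 1] by simp
  qed
  have s3: "p dvd b * c 1 - a * c 2"
  proof -
    have "cf (D-1) = b * c 1 - a * c 2" unfolding cf_def coeff_sumX[OF D] coeff_X012 using D PD Dneq by (simp add: algebra_simps)
    then show ?thesis using cfd[of "D-1"] D by simp
  qed
  have s4: "\<And>j. 2 \<le> j \<Longrightarrow> j + 1 < D \<Longrightarrow> p dvd coeff (Pp D \<kappa>) j * (c 0 - a * c 1 - b * c 2) + c (j+1)"
  proof -
    fix j assume j: "2 \<le> j" "j + 1 < D"
    have "cf j = coeff (Pp D \<kappa>) j * (c 0 - a * c 1 - b * c 2) + c (j+1)"
    proof -
      have "j \<noteq> D - 1" "j \<noteq> D" "j \<noteq> 1" using j by auto
      then show ?thesis unfolding cf_def coeff_sumX[OF D] coeff_X012 using j by (simp add: algebra_simps)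
    qed
    then show "p dvd coeff (Pp D \<kappa>) j * (c 0 - a * c 1 - b * c 2) + c (j+1)" using cfd[of j] j by simp
  qed
  have p2: "\<not> p dvd 2"
  proof
    assume "p dvd 2" then have "p \<le> 2" by (intro zdvd_imp_le) auto
    then show False using p by simp
  qed
  have "p dvd 2 * c 0"
  proof -
    have e: "2 * c 0 = (c 0 + a * c 1 + b * c 2) + (c 0 - a * c 1 - b * c 2)" by simp
    have "p dvd (c 0 + a * c 1 + b * c 2) + (c 0 - a * c 1 - b * c 2)" using s1 s2 by (rule dvd_add)
    then show ?thesis by (subst e)
  qed
  then have pc0: "p dvd c 0" using p(1) p2 prime_dvd_mult_iff by blast
  have q1: "p dvd a * c 1 + b * c 2" using s1 pc0 by (metis add.assoc dvd_add_right_iff)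
  have pc1: "p dvd c 1"
  proof -
    have "c 1 = (a^2 + b^2 + 1) * c 1 - (a * (a * c 1 + b * c 2) + b * (b * c 1 - a * c 2))"
      by (simp add: algebra_simps power2_eq_square)
    moreover have "p dvd (a^2 + b^2 + 1) * c 1" using ab by simp
    moreover have "p dvd a * (a * c 1 + b * c 2) + b * (b * c 1 - a * c 2)" using q1 s3 by simp
    ultimately show ?thesis by (metis dvd_diff)
  qed
  have pc2: "p dvd c 2"
  proof -
    have "c 2 = (a^2 + b^2 + 1) * c 2 - (b * (a * c 1 + b * c 2) - a * (b * c 1 - a * c 2))"
      by (simp add: algebra_simps power2_eq_square)
    moreover have "p dvd (a^2 + b^2 + 1) * c 2" using ab by simp
    moreover have "p dvd b * (a * c 1 + b * c 2) - a * (b * c 1 - a * c 2)" using q1 s3 by simp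
    ultimately show ?thesis by (metis dvd_diff)
  qed
  have "\<forall>k<D. p dvd c k"
  proof (intro allI impI)
    fix k assume k: "k < D"
    consider "k = 0" | "k = 1" | "k = 2" | "k \<ge> 3" by linarith
    then show "p dvd c k"
    proof cases
      case 4
      then have "p dvd coeff (Pp D \<kappa>) (k-1) * (c 0 - a * c 1 - b * c 2) + c (k - 1 + 1)" using s4[of "k-1"] k by simp
      moreover have "p dvd coeff (Pp D \<kappa>) (k-1) * (c 0 - a * c 1 - b * c 2)" using s2 by simp
      ultimately have "p dvd c (k - 1 + 1)" by (metis dvd_add_right_iff)
      then show ?thesis using 4 by simp
    qed (use pc0 pc1 pc2 in auto)
  qed
  then show ?thesis using pe0 peN by blast
qed


lemma poly_sum_upto:
  fixes f :: "int poly"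
  assumes "degree f \<le> N"
  shows "poly f x = (\<Sum>i\<le>N. coeff f i * x^i)"
proof -
  have "poly f x = (\<Sum>i\<le>degree f. coeff f i * x^i)" by (rule poly_altdef)
  also have "\<dots> = (\<Sum>i\<le>N. coeff f i * x^i)"
    by (rule sum.mono_neutral_left) (use assms le_degree in auto)
  finally show ?thesis .
qed

lemma poly_Pp_sum:
  assumes D: "D \<ge> 3"
  shows "poly (Pp D \<kappa>) x = (\<Sum>j\<in>{2..D-2}. coeff (Pp D \<kappa>) j * x^j)"
proof -
  have "degree (Pp D \<kappa>) \<le> D"
  proof (rule degree_le, intro allI impI)
    fix i assume "D < i"
    then have "D - 2 < i" by arith
    then show "coeff (Pp D \<kappa>) i = 0" using coeff_Pp_zero[OF D] by blast
  qed
  then have "poly (Pp D \<kappa>) x = (\<Sum>j\<le>D. coeff (Pp D \<kappa>) j * x^j)" by (rule poly_sum_upto)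
  also have "\<dots> = (\<Sum>j\<in>{2..D-2}. coeff (Pp D \<kappa>) j * x^j)"
  proof (rule sum.mono_neutral_right)
    show "\<forall>i\<in>{..D} - {2..D - 2}. coeff (Pp D \<kappa>) i * x ^ i = 0"
    proof
      fix i assume "i \<in> {..D} - {2..D - 2}"
      then have "i < 2 \<or> i > D - 2" by auto
      then show "coeff (Pp D \<kappa>) i * x ^ i = 0" using coeff_Pp_zero[OF D] by simp
    qed
  qed auto
  finally show ?thesis .
qed

lemma aux_ring_F:
  fixes u x P w a b :: int
  shows "(u + (x + P)) + a * (a * u - a * (x + P) + b * w) + b * (b * u - b * (x + P) - a * w) - 2 * P
    = 2 * x + (a^2 + b^2 + 1) * (u - (x + P))"
  by (simp add: algebra_simps power2_eq_square)

lemma inj_mod: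
  fixes a b \<kappa> p s t :: int
  assumes D: "D \<ge> 3" and p: "prime p" "p \<ge> 7" and ab: "p dvd a^2 + b^2 + 1"
    and st: "s \<in> {0..<p}" "t \<in> {0..<p}"
    and eq: "\<forall>k<D. poly (Xp D a b \<kappa> k) s mod p = poly (Xp D a b \<kappa> k) t mod p"
  shows "s = t"
proof -
  define F where "F = (\<lambda>x. poly (Xp D a b \<kappa> 0) x + a * poly (Xp D a b \<kappa> 1) x + b * poly (Xp D a b \<kappa> 2) x
     - 2 * (\<Sum>j\<in>{2..D-2}. coeff (Pp D \<kappa>) j * poly (Xp D a b \<kappa> (j+1)) x))"
  have cX: "\<And>k. k < D \<Longrightarrow> [poly (Xp D a b \<kappa> k) s = poly (Xp D a b \<kappa> k) t] (mod p)"
    using eq unfolding cong_def by blast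
  have j1: "\<And>j. j \<in> {2..D-2} \<Longrightarrow> j + 1 < D" using D by auto
  have "[F s = F t] (mod p)" unfolding F_def
    by (intro cong_diff cong_add cong_mult cong_refl cong_sum cX j1) (use D in auto)
  moreover have Fx: "\<And>x. F x = 2 * x + (a^2 + b^2 + 1) * (x^D - poly (Vp D \<kappa>) x)"
  proof -
    fix x :: int
    have "(\<Sum>j\<in>{2..D-2}. coeff (Pp D \<kappa>) j * poly (Xp D a b \<kappa> (j+1)) x) = (\<Sum>j\<in>{2..D-2}. coeff (Pp D \<kappa>) j * x^j)"
      by (rule sum.cong) (auto simp: Xp_def poly_monom)
    also have "\<dots> = poly (Pp D \<kappa>) x" using poly_Pp_sum[OF D] by simp
    finally have S: "(\<Sum>j\<in>{2..D-2}. coeff (Pp D \<kappa>) j * poly (Xp D a b \<kappa> (j+1)) x) = poly (Pp D \<kappa>) x" .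
    have V: "poly (Vp D \<kappa>) x = x + poly (Pp D \<kappa>) x" unfolding Vp_def by (simp add: poly_monom)
    show "F x = 2 * x + (a^2 + b^2 + 1) * (x^D - poly (Vp D \<kappa>) x)"
    proof -
      have X0: "poly (Xp D a b \<kappa> 0) x = x^D + (x + poly (Pp D \<kappa>) x)" using V by (simp add: Xp_def poly_monom)
      have X1: "poly (Xp D a b \<kappa> 1) x = a * x^D - a * (x + poly (Pp D \<kappa>) x) + b * x^(D-1)" using V by (simp add: Xp_def poly_monom)
      have X2: "poly (Xp D a b \<kappa> 2) x = b * x^D - b * (x + poly (Pp D \<kappa>) x) - a * x^(D-1)" using V by (simp add: Xp_def poly_monom)
      show ?thesis unfolding F_def S X0 X1 X2 V by (rule aux_ring_F)
    qed
  qed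
  ultimately have c1: "[2 * s + (a^2 + b^2 + 1) * (s^D - poly (Vp D \<kappa>) s) = 2 * t + (a^2 + b^2 + 1) * (t^D - poly (Vp D \<kappa>) t)] (mod p)"
    by simp
  then have d1: "p dvd (2 * s + (a^2 + b^2 + 1) * (s^D - poly (Vp D \<kappa>) s)) - (2 * t + (a^2 + b^2 + 1) * (t^D - poly (Vp D \<kappa>) t))"
    by (simp add: cong_iff_dvd_diff)
  have d2: "p dvd (a^2 + b^2 + 1) * (s^D - poly (Vp D \<kappa>) s) - (a^2 + b^2 + 1) * (t^D - poly (Vp D \<kappa>) t)"
    using ab by (simp add: right_diff_distrib[symmetric])
  have "2 * (s - t) = ((2 * s + (a^2 + b^2 + 1) * (s^D - poly (Vp D \<kappa>) s)) - (2 * t + (a^2 + b^2 + 1) * (t^D - poly (Vp D \<kappa>) t)))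
     - ((a^2 + b^2 + 1) * (s^D - poly (Vp D \<kappa>) s) - (a^2 + b^2 + 1) * (t^D - poly (Vp D \<kappa>) t))"
    by (simp add: algebra_simps)
  then have "p dvd 2 * (s - t)" using d1 d2 by (metis dvd_diff)
  moreover have "\<not> p dvd 2"
  proof
    assume "p dvd 2" then have "p \<le> 2" by (intro zdvd_imp_le) auto
    then show False using p by simp
  qed
  ultimately have d: "p dvd (s - t)" using p(1) prime_dvd_mult_iff by blast
  show "s = t"
  proof (rule ccontr)
    assume "s \<noteq> t"
    then have "s - t \<noteq> 0" by simp
    then have "\<bar>p\<bar> \<le> \<bar>s - t\<bar>" using d by (rule dvd_imp_le_int)
    then show False using st by auto
  qed
qed


lemma sum_lessThan_Suc2: "(\<Sum>j<(D::nat)+2. f j) = f 0 + (\<Sum>k<D. f (k+1)) + f (D+1)"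
proof -
  have "(\<Sum>j<D+2. f j) = (\<Sum>j<Suc (D+1). f j)" by simp
  also have "\<dots> = f 0 + (\<Sum>i<D+1. f (Suc i))" by (rule sum.lessThan_Suc_shift)
  also have "(\<Sum>i<D+1. f (Suc i)) = (\<Sum>k<D. f (k+1)) + f (D+1)" by simp
  finally show ?thesis by (simp add: add.assoc)
qed

lemma geom_relation:
  fixes T :: "(real^'d) set" and \<iota> :: "nat \<Rightarrow> 'd"
  assumes bij: "bij_betw \<iota> {0..<CARD('d)} UNIV"
    and P: "is_sphere T \<or> is_hyperplane T"
  shows "\<exists>w::nat\<Rightarrow>real. (\<exists>j<CARD('d)+2. w j \<noteq> 0) \<and>
     (\<forall>z\<in>T. w 0 + (\<Sum>k<CARD('d). w (k+1) * z $ \<iota> k) + w (CARD('d)+1) * (\<Sum>k<CARD('d). (z $ \<iota> k)^2) = 0)"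
proof -
  let ?D = "CARD('d)"
  have reidx: "\<And>g :: 'd \<Rightarrow> real. (\<Sum>k<?D. g (\<iota> k)) = (\<Sum>i\<in>UNIV. g i)"
    using sum.reindex_bij_betw[OF bij] by (simp add: atLeast0LessThan)
  from P show ?thesis
  proof
    assume "is_sphere T"
    then obtain c r where r: "r > 0" and T: "T = sphere c r" unfolding is_sphere_def by blast
    define w where "w = (\<lambda>j. if j = 0 then (\<Sum>i\<in>UNIV. (c $ i)^2) - r^2 else if j \<le> ?D then -2 * c $ \<iota> (j - 1) else 1)"
    have "w (?D+1) \<noteq> 0" unfolding w_def by simp
    moreover have "\<forall>z\<in>T. w 0 + (\<Sum>k<?D. w (k+1) * z $ \<iota> k) + w (?D+1) * (\<Sum>k<?D. (z $ \<iota> k)^2) = 0"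
    proof
      fix z assume "z \<in> T"
      then have "dist c z = r" unfolding T by simp
      then have "(norm (c - z))^2 = r^2" by (simp add: dist_norm)
      then have "(c - z) \<bullet> (c - z) = r^2" by (simp add: power2_norm_eq_inner)
      then have e: "(\<Sum>i\<in>UNIV. (c $ i - z $ i) * (c $ i - z $ i)) = r^2" by (simp add: inner_vec_def)
      have "(\<Sum>i\<in>UNIV. (c $ i - z $ i) * (c $ i - z $ i)) = (\<Sum>i\<in>UNIV. (c $ i)^2) - 2 * (\<Sum>i\<in>UNIV. c $ i * z $ i) + (\<Sum>i\<in>UNIV. (z $ i)^2)"
        by (simp add: algebra_simps power2_eq_square sum.distrib sum_subtractf sum_distrib_left)
      moreover have "(\<Sum>k<?D. w (k+1) * z $ \<iota> k) = - 2 * (\<Sum>i\<in>UNIV. c $ i * z $ i)"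
      proof -
        have "(\<Sum>k<?D. w (k+1) * z $ \<iota> k) = (\<Sum>k<?D. -2 * (c $ \<iota> k * z $ \<iota> k))"
          by (rule sum.cong) (auto simp: w_def)
        also have "\<dots> = -2 * (\<Sum>k<?D. c $ \<iota> k * z $ \<iota> k)" by (simp add: sum_distrib_left)
        also have "(\<Sum>k<?D. c $ \<iota> k * z $ \<iota> k) = (\<Sum>i\<in>UNIV. c $ i * z $ i)" by (rule reidx)
        finally show ?thesis by simp
      qed
      moreover have "(\<Sum>k<?D. (z $ \<iota> k)^2) = (\<Sum>i\<in>UNIV. (z $ i)^2)" by (rule reidx)
      moreover have "w 0 = (\<Sum>i\<in>UNIV. (c $ i)^2) - r^2" "w (?D+1) = 1" unfolding w_def by auto
      ultimately show "w 0 + (\<Sum>k<?D. w (k+1) * z $ \<iota> k) + w (?D+1) * (\<Sum>k<?D. (z $ \<iota> k)^2) = 0"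
        using e by simp
    qed
    ultimately show ?thesis by (intro exI[of _ w]) auto
  next
    assume "is_hyperplane T"
    then obtain a b where a: "a \<noteq> 0" and T: "T = {x. a \<bullet> x = b}" unfolding is_hyperplane_def by blast
    define w where "w = (\<lambda>j. if j = 0 then - b else if j \<le> ?D then a $ \<iota> (j - 1) else 0)"
    have "\<exists>i. a $ i \<noteq> 0"
    proof (rule ccontr)
      assume "\<not> (\<exists>i. a $ i \<noteq> 0)"
      then have "a = 0" by (simp add: Finite_Cartesian_Product.vec_eq_iff)
      with a show False by simp
    qed
    then obtain i where ai: "a $ i \<noteq> 0" by blast
    have "i \<in> \<iota> ` {0..<?D}" using bij unfolding bij_betw_def by simp
    then obtain k where k: "k < ?D" "\<iota> k = i" by auto
    have "w (k+1) \<noteq> 0" unfolding w_def using k ai by simp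
    then have "\<exists>j<?D+2. w j \<noteq> 0" using k by (intro exI[of _ "k+1"]) simp
    moreover have "\<forall>z\<in>T. w 0 + (\<Sum>k<?D. w (k+1) * z $ \<iota> k) + w (?D+1) * (\<Sum>k<?D. (z $ \<iota> k)^2) = 0"
    proof
      fix z assume "z \<in> T"
      then have e: "(\<Sum>i\<in>UNIV. a $ i * z $ i) = b" unfolding T by (simp add: inner_vec_def)
      have "(\<Sum>k<?D. w (k+1) * z $ \<iota> k) = (\<Sum>k<?D. a $ \<iota> k * z $ \<iota> k)"
        by (rule sum.cong) (auto simp: w_def)
      also have "\<dots> = (\<Sum>i\<in>UNIV. a $ i * z $ i)" by (rule reidx)
      finally have "(\<Sum>k<?D. w (k+1) * z $ \<iota> k) = b" using e by simp
      moreover have "w 0 = - b" "w (?D+1) = 0" unfolding w_def by auto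
      ultimately show "w 0 + (\<Sum>k<?D. w (k+1) * z $ \<iota> k) + w (?D+1) * (\<Sum>k<?D. (z $ \<iota> k)^2) = 0"
        by simp
    qed
    ultimately show ?thesis by blast
  qed
qed


lemma construction:
  assumes D3: "CARD('d::finite) \<ge> 3" and pp: "prime (p::nat)" and p7: "p \<ge> 7"
  shows "\<exists>A :: (real^'d) set. A \<subseteq> lattice_cube p \<and> card A = p \<and>
     no_k_on_common (CARD('d)+2) is_sphere A \<and> no_k_on_common (CARD('d)+2) is_hyperplane A"
proof -
  define D where "D = CARD('d)"
  have D: "D \<ge> 3" using D3 unfolding D_def .
  define q :: int where "q = int p"
  have qp: "prime q" unfolding q_def using pp by (simp add: prime_nat_int_transfer)
  have q7: "q \<ge> 7" unfolding q_def using p7 by simp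
  obtain a b where ab: "q dvd a^2 + b^2 + 1" using exists_sum_two_squares_neg1[OF qp] q7 by auto
  define \<kappa> where "\<kappa> = ((q + 1) div 2)^2"
  have kp: "q dvd 4 * \<kappa> - 1"
  proof -
    have "odd q" using qp q7 prime_odd_int by auto
    then obtain m where m: "q = 2 * m + 1" by (blast elim: oddE)
    then have "(q + 1) div 2 = m + 1" by simp
    then have "4 * \<kappa> - 1 = q * (q + 2)" unfolding \<kappa>_def using m by (simp add: power2_eq_square algebra_simps)
    then show ?thesis by simp
  qed
  obtain \<iota> :: "nat \<Rightarrow> 'd" where bij: "bij_betw \<iota> {0..<D} UNIV"
    using ex_bij_betw_nat_finite[of "UNIV :: 'd set"] unfolding D_def by auto
  define y where "y = (\<lambda>k t. poly (Xp D a b \<kappa> k) t mod q + 1)"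
  define pt :: "int \<Rightarrow> real^'d" where "pt = (\<lambda>t. \<chi> i. real_of_int (y (inv_into {0..<D} \<iota> i) t))"
  have ptk: "\<And>k t. k < D \<Longrightarrow> pt t $ \<iota> k = real_of_int (y k t)"
  proof -
    fix k t assume "k < D"
    then have "inv_into {0..<D} \<iota> (\<iota> k) = k" using bij by (intro bij_betw_inv_into_left) auto
    then show "pt t $ \<iota> k = real_of_int (y k t)" unfolding pt_def by simp
  qed
  have ybd: "\<And>k t. 1 \<le> y k t \<and> y k t \<le> q" unfolding y_def using q7 by (simp add: pos_mod_bound pos_mod_sign) (smt (verit) pos_mod_bound)
  define A where "A = pt ` {0..<q}"
  have Acube: "A \<subseteq> lattice_cube p"
  proof
    fix z assume "z \<in> A"
    then obtain t where z: "z = pt t" unfolding A_def by auto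
    show "z \<in> lattice_cube p" unfolding lattice_cube_def
    proof (intro CollectI allI)
      fix i :: 'd
      have "z $ i = real_of_int (y (inv_into {0..<D} \<iota> i) t)" unfolding z pt_def by simp
      moreover have "1 \<le> y (inv_into {0..<D} \<iota> i) t" "y (inv_into {0..<D} \<iota> i) t \<le> q" using ybd by auto
      ultimately have "z $ i = real (nat (y (inv_into {0..<D} \<iota> i) t)) \<and> nat (y (inv_into {0..<D} \<iota> i) t) \<in> {1..p}"
        unfolding q_def by auto
      then show "z $ i \<in> real ` {1..p}" by auto
    qed
  qed
  have inj: "inj_on pt {0..<q}"
  proof (rule inj_onI)
    fix s t assume s: "s \<in> {0..<q}" and t: "t \<in> {0..<q}" and e: "pt s = pt t"
    have "\<forall>k<D. poly (Xp D a b \<kappa> k) s mod q = poly (Xp D a b \<kappa> k) t mod q"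
    proof (intro allI impI)
      fix k assume k: "k < D"
      have "real_of_int (y k s) = real_of_int (y k t)" using ptk[OF k, of s] ptk[OF k, of t] e by simp
      then show "poly (Xp D a b \<kappa> k) s mod q = poly (Xp D a b \<kappa> k) t mod q" unfolding y_def by simp
    qed
    then show "s = t" using inj_mod[OF D qp q7 ab s t] by blast
  qed
  have cardA: "card A = p" unfolding A_def using card_image[OF inj] q_def by simp
  have main: "\<And>P S T. (P = is_sphere \<or> P = is_hyperplane) \<Longrightarrow> S \<subseteq> A \<Longrightarrow> card S = D + 2 \<Longrightarrow> P T \<Longrightarrow> S \<subseteq> T \<Longrightarrow> False"
  proof -
    fix P S T assume P: "P = is_sphere \<or> P = is_hyperplane" and SA: "S \<subseteq> A" and cS: "card S = D + 2"
      and PT: "P T" and ST: "S \<subseteq> T"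
    have "is_sphere T \<or> is_hyperplane T" using P PT by auto
    from geom_relation[OF bij[unfolded D_def] this] obtain w :: "nat \<Rightarrow> real" where
      w0: "\<exists>j<D+2. w j \<noteq> 0" and
      wrel: "\<forall>z\<in>T. w 0 + (\<Sum>k<D. w (k+1) * z $ \<iota> k) + w (D+1) * (\<Sum>k<D. (z $ \<iota> k)^2) = 0"
      unfolding D_def by blast
    define TT where "TT = {t\<in>{0..<q}. pt t \<in> S}"
    have TTsub: "TT \<subseteq> {0..<q}" unfolding TT_def by auto
    have finTT: "finite TT" using TTsub by (rule finite_subset) simp
    have imgTT: "pt ` TT = S" unfolding TT_def using SA unfolding A_def by auto
    have cardTT: "card TT = D + 2"
      using card_image[OF inj_on_subset[OF inj TTsub]] imgTT cS by simp
    obtain \<sigma> where \<sigma>: "bij_betw \<sigma> {0..<D+2} TT" using ex_bij_betw_nat_finite[OF finTT] cardTT by auto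
    have \<sigma>in: "\<And>i. i < D + 2 \<Longrightarrow> \<sigma> i \<in> TT" using \<sigma> unfolding bij_betw_def by auto
    define L where "L = (\<lambda>i j. if j = 0 then 1 else if j \<le> D then y (j-1) (\<sigma> i) else (\<Sum>k<D. (y k (\<sigma> i))^2))"
    have Lrow: "\<And>i (f :: nat \<Rightarrow> 'x::comm_ring_1). (\<Sum>j<D+2. of_int (L i j) * f j)
        = f 0 + (\<Sum>k<D. of_int (y k (\<sigma> i)) * f (k+1)) + of_int (\<Sum>k<D. (y k (\<sigma> i))^2) * f (D+1)"
    proof -
      fix i and f :: "nat \<Rightarrow> 'x::comm_ring_1"
      have "(\<Sum>k<D. of_int (L i (k+1)) * f (k+1)) = (\<Sum>k<D. of_int (y k (\<sigma> i)) * f (k+1))"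
        by (rule sum.cong) (auto simp: L_def)
      then show "(\<Sum>j<D+2. of_int (L i j) * f j)
        = f 0 + (\<Sum>k<D. of_int (y k (\<sigma> i)) * f (k+1)) + of_int (\<Sum>k<D. (y k (\<sigma> i))^2) * f (D+1)"
        unfolding sum_lessThan_Suc2[of "\<lambda>j. of_int (L i j) * f j" D] by (simp add: L_def)
    qed
    have realrel: "\<forall>i<D+2. (\<Sum>j<D+2. real_of_int (L i j) * w j) = 0"
    proof (intro allI impI)
      fix i assume i: "i < D + 2"
      have z: "pt (\<sigma> i) \<in> T" using \<sigma>in[OF i] ST unfolding TT_def by auto
      have "(\<Sum>j<D+2. real_of_int (L i j) * w j)
          = w 0 + (\<Sum>k<D. real_of_int (y k (\<sigma> i)) * w (k+1)) + real_of_int (\<Sum>k<D. (y k (\<sigma> i))^2) * w (D+1)"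
        using Lrow[of i w] by simp
      also have "\<dots> = w 0 + (\<Sum>k<D. w (k+1) * pt (\<sigma> i) $ \<iota> k) + w (D+1) * (\<Sum>k<D. (pt (\<sigma> i) $ \<iota> k)^2)"
      proof -
        have "(\<Sum>k<D. real_of_int (y k (\<sigma> i)) * w (k+1)) = (\<Sum>k<D. w (k+1) * pt (\<sigma> i) $ \<iota> k)"
          by (rule sum.cong) (auto simp: ptk)
        moreover have "real_of_int (\<Sum>k<D. (y k (\<sigma> i))^2) = (\<Sum>k<D. (pt (\<sigma> i) $ \<iota> k)^2)"
          by (simp add: ptk)
        ultimately show ?thesis by simp
      qed
      also have "\<dots> = 0" using wrel z by blast
      finally show "(\<Sum>j<D+2. real_of_int (L i j) * w j) = 0" .
    qed
    have ex: "\<exists>c. (\<exists>j<D+2. c j \<noteq> 0) \<and> (\<forall>i<D+2. (\<Sum>j<D+2. L i j * c j) = 0)"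
      by (rule int_kernel[OF realrel w0])
    from prim_kernel[OF ex, of q] q7 obtain c where
      cnd: "\<exists>j<D+2. \<not> q dvd c j" and cker: "\<forall>i<D+2. (\<Sum>j<D+2. L i j * c j) = 0" by force
    define e0 where "e0 = c 0 + (\<Sum>k<D. c (k+1)) + int D * c (D+1)"
    define cc where "cc = (\<lambda>k. c (k+1) + 2 * c (D+1))"
    define eN where "eN = c (D+1)"
    have root: "\<forall>t\<in>TT. q dvd (e0 + (\<Sum>k<D. cc k * poly (Xp D a b \<kappa> k) t) + eN * (\<Sum>k<D. (poly (Xp D a b \<kappa> k) t)^2))"
    proof
      fix t assume t: "t \<in> TT"
      then obtain i where i: "i < D + 2" "\<sigma> i = t" using \<sigma> unfolding bij_betw_def by force
      define X where "X = (\<lambda>k. poly (Xp D a b \<kappa> k) t)"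
      have ey: "c 0 + (\<Sum>k<D. y k t * c (k+1)) + (\<Sum>k<D. (y k t)^2) * c (D+1) = 0"
        using cker i Lrow[of i c] by simp
      have cy: "\<And>k. [y k t = X k + 1] (mod q)" unfolding y_def X_def cong_def by (simp add: mod_add_left_eq)
      have "[c 0 + (\<Sum>k<D. y k t * c (k+1)) + (\<Sum>k<D. (y k t)^2) * c (D+1)
           = c 0 + (\<Sum>k<D. (X k + 1) * c (k+1)) + (\<Sum>k<D. (X k + 1)^2) * c (D+1)] (mod q)"
        by (intro cong_add cong_mult cong_refl cong_sum cong_pow cy)
      moreover have "c 0 + (\<Sum>k<D. (X k + 1) * c (k+1)) + (\<Sum>k<D. (X k + 1)^2) * c (D+1)
           = e0 + (\<Sum>k<D. cc k * X k) + eN * (\<Sum>k<D. (X k)^2)"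
      proof -
        have s1: "(\<Sum>k<D. (X k + 1) * c (k+1)) = (\<Sum>k<D. X k * c (k+1)) + (\<Sum>k<D. c (k+1))"
          by (simp add: algebra_simps sum.distrib)
        have s2: "(\<Sum>k<D. (X k + 1)^2) = (\<Sum>k<D. (X k)^2) + 2 * (\<Sum>k<D. X k) + int D"
          by (simp add: power2_eq_square algebra_simps sum.distrib sum_distrib_left)
        have s3: "(\<Sum>k<D. cc k * X k) = (\<Sum>k<D. X k * c (k+1)) + 2 * c (D+1) * (\<Sum>k<D. X k)"
          by (simp add: cc_def algebra_simps sum.distrib sum_distrib_left)
        show ?thesis unfolding s1 s2 s3 e0_def eN_def by (simp add: algebra_simps)
      qed
      ultimately have "[0 = e0 + (\<Sum>k<D. cc k * X k) + eN * (\<Sum>k<D. (X k)^2)] (mod q)" using ey i by simp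
      then have "[e0 + (\<Sum>k<D. cc k * X k) + eN * (\<Sum>k<D. (X k)^2) = 0] (mod q)" by (rule cong_sym)
      then show "q dvd (e0 + (\<Sum>k<D. cc k * poly (Xp D a b \<kappa> k) t) + eN * (\<Sum>k<D. (poly (Xp D a b \<kappa> k) t)^2))"
        unfolding X_def cong_0_iff .
    qed
    have arcres: "q dvd e0 \<and> q dvd eN \<and> (\<forall>k<D. q dvd cc k)"
      by (rule arc[OF D qp q7 ab kp finTT TTsub cardTT root])
    have dN: "q dvd c (D+1)" using arcres unfolding eN_def by simp
    have dk: "\<And>k. k < D \<Longrightarrow> q dvd c (k+1)"
    proof -
      fix k assume "k < D"
      then have "q dvd c (k+1) + 2 * c (D+1)" using arcres unfolding cc_def by simp
      moreover have "q dvd 2 * c (D+1)" using dN by simp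
      ultimately show "q dvd c (k+1)" by (metis dvd_add_left_iff)
    qed
    have d0: "q dvd c 0"
    proof -
      have "q dvd (\<Sum>k<D. c (k+1))" using dk by (intro dvd_sum) simp
      moreover have "q dvd int D * c (D+1)" using dN by simp
      ultimately have "q dvd (\<Sum>k<D. c (k+1)) + int D * c (D+1)" by simp
      moreover have "q dvd e0" using arcres by simp
      ultimately show ?thesis unfolding e0_def by (metis add.assoc dvd_add_left_iff)
    qed
    have "\<forall>j<D+2. q dvd c j"
    proof (intro allI impI)
      fix j assume j: "j < D + 2"
      consider "j = 0" | "j = D + 1" | "1 \<le> j \<and> j \<le> D" using j by linarith
      then show "q dvd c j"
      proof cases
        case 3
        then have "j - 1 < D" by arith
        then have "q dvd c ((j - 1) + 1)" using dk[of "j-1"] by blast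
        moreover have "(j - 1) + 1 = j" using 3 by arith
        ultimately show ?thesis by simp
      qed (use d0 dN in auto)
    qed
    then show False using cnd by blast
  qed
  have "no_k_on_common (CARD('d)+2) is_sphere A"
    unfolding no_k_on_common_def using main[of is_sphere] unfolding D_def by blast
  moreover have "no_k_on_common (CARD('d)+2) is_hyperplane A"
    unfolding no_k_on_common_def using main[of is_hyperplane] unfolding D_def by blast
  ultimately show ?thesis using Acube cardA by blast
qed


lemma lattice_cube_mono:
  assumes "(m::nat) \<le> n"
  shows "lattice_cube m \<subseteq> lattice_cube n"
proof (rule subsetI)
  fix x :: "real^'d" assume "x \<in> lattice_cube m"
  then have h: "\<forall>i. x $ i \<in> real ` {1..m}" unfolding lattice_cube_def by simp
  have "real ` {1..m} \<subseteq> real ` {1..n}" using assms by (intro image_mono) auto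
  then have "\<forall>i. x $ i \<in> real ` {1..n}" using h by blast
  then show "x \<in> lattice_cube n" unfolding lattice_cube_def by simp
qed

theorem theorem1p1:
  assumes "CARD('d::finite) \<ge> 3"
  shows "\<exists>\<epsilon> :: nat \<Rightarrow> real. \<epsilon> \<longlonglongrightarrow> 0 \<and>
     (\<forall>n::nat. n \<ge> 1 \<longrightarrow>
        (\<exists>A :: (real ^ 'd) set. A \<subseteq> lattice_cube n \<and>
           real (card A) \<ge> real n powr (3 / (real CARD('d) + 1) - \<epsilon> n) \<and>
           no_k_on_common (CARD('d) + 2) is_sphere A \<and>
           no_k_on_common (CARD('d) + 2) is_hyperplane A))"
proof -
  let ?D = "CARD('d)"
  obtain N0 where N0: "\<And>N. N \<ge> N0 \<Longrightarrow> \<exists>p::nat. prime p \<and> real N powr (3/4) \<le> real p \<and> p \<le> N \<and> 7 \<le> p"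
    using exists_prime_large unfolding eventually_sequentially by blast
  define \<epsilon> :: "nat \<Rightarrow> real" where "\<epsilon> = (\<lambda>n. if n < N0 then 3 / (real ?D + 1) else 0)"
  have lim: "\<epsilon> \<longlonglongrightarrow> 0"
  proof (rule tendsto_eventually)
    have "\<forall>n\<ge>N0. \<epsilon> n = 0" unfolding \<epsilon>_def by simp
    then show "\<forall>\<^sub>F n in sequentially. \<epsilon> n = 0" unfolding eventually_sequentially by blast
  qed
  have "\<forall>n::nat. n \<ge> 1 \<longrightarrow>
        (\<exists>A :: (real ^ 'd) set. A \<subseteq> lattice_cube n \<and>
           real (card A) \<ge> real n powr (3 / (real ?D + 1) - \<epsilon> n) \<and>
           no_k_on_common (?D + 2) is_sphere A \<and>
           no_k_on_common (?D + 2) is_hyperplane A)"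
  proof (intro allI impI)
    fix n :: nat assume n1: "n \<ge> 1"
    show "\<exists>A :: (real ^ 'd) set. A \<subseteq> lattice_cube n \<and>
           real (card A) \<ge> real n powr (3 / (real ?D + 1) - \<epsilon> n) \<and>
           no_k_on_common (?D + 2) is_sphere A \<and>
           no_k_on_common (?D + 2) is_hyperplane A"
    proof (cases "n < N0")
      case True
      define A :: "(real^'d) set" where "A = {\<chi> i. 1}"
      have one: "(1::real) \<in> real ` {1..n}" using n1 by (intro image_eqI[of _ _ 1]) auto
      have "A \<subseteq> lattice_cube n" unfolding A_def lattice_cube_def using one by simp
      moreover have "real (card A) \<ge> real n powr (3 / (real ?D + 1) - \<epsilon> n)"
      proof -
        have "\<epsilon> n = 3 / (real ?D + 1)" unfolding \<epsilon>_def using True by simp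
        then have "real n powr (3 / (real ?D + 1) - \<epsilon> n) = 1" using n1 by simp
        moreover have "card A = 1" unfolding A_def by simp
        ultimately show ?thesis by simp
      qed
      moreover have "\<And>P. no_k_on_common (?D + 2) P A"
      proof -
        fix P
        show "no_k_on_common (?D + 2) P A" unfolding no_k_on_common_def
        proof (intro allI impI)
          fix S assume S: "S \<subseteq> A \<and> card S = ?D + 2"
          have "card S \<le> card A" using S by (intro card_mono) (auto simp: A_def)
          moreover have "card A = 1" unfolding A_def by simp
          ultimately show "\<not> (\<exists>T. P T \<and> S \<subseteq> T)" using S by simp
        qed
      qed
      ultimately show ?thesis by blast
    next
      case False
      then have "n \<ge> N0" by simp
      then obtain p :: nat where p: "prime p" "real n powr (3/4) \<le> real p" "p \<le> n" "7 \<le> p"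
        using N0 by blast
      obtain A :: "(real^'d) set" where A: "A \<subseteq> lattice_cube p" "card A = p"
        "no_k_on_common (?D+2) is_sphere A" "no_k_on_common (?D+2) is_hyperplane A"
        using construction[OF assms p(1) p(4)] by blast
      have "A \<subseteq> lattice_cube n" using A(1) lattice_cube_mono[OF p(3)] by blast
      moreover have "real n powr (3 / (real ?D + 1) - \<epsilon> n) \<le> real (card A)"
      proof -
        have e0: "\<epsilon> n = 0" unfolding \<epsilon>_def using False by simp
        have "3 / (real ?D + 1) \<le> 3 / 4"
          by (rule divide_left_mono) (use assms in auto)
        then have "real n powr (3 / (real ?D + 1) - \<epsilon> n) \<le> real n powr (3/4)"
          unfolding e0 using n1 by (intro powr_mono) auto
        then show ?thesis using p(2) A(2) by simp
      qed
      ultimately show ?thesis using A by blast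
    qed
  qed
  then show ?thesis using lim by blast
qed

end
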